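(* Let $K_n$ be the complete directed graph on $[n]$ with edges $(i,j)$ for all $i<j$. A subgraph $H\subseteq K_n$ gives a face $\tilde Q_H$ of $\tilde Q_{K_n}$ if and only if there are integers $0=n_0<n_1<\dots<n_\ell<n_{\ell+1}=n$ ($\ell\ge0$) such that $H=K_{[n_0+1,n_1]}\sqcup K_{[n_1+1,n_2]}\sqcup\dots\sqcup K_{[n_\ell+1,n]}$, i.e. $E(H)=\{(i,j):i<j,\ i,j\in[n_k+1,n_{k+1}]\text{ for some }k\}$.
   Context: $[a,b]=\{a,a+1,\dots,b\}$, and $K_P$ denotes the complete graph on $P$ with edges oriented from smaller to larger vertex. Subgraphs $H\subseteq K_n$ have vertex set $[n]$. $\tilde Q_H=\mathrm{conv}(\{\mathbf 0\}\cup\{\mathbf e_i-\mathbf e_j:(i,j)\in E(H)\})\subset\mathbb R^n$. *)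

theory Defs
  imports "HOL-Analysis.Analysis" "HOL-Library.Function_Algebras"
begin

text \<open>Vectors of R^n are modelled as functions nat => real (coordinates 1..n used);
  we equip functions with the pointwise real vector space structure.\<close>

instantiation "fun" :: (type, real_vector) real_vector
begin
definition scaleR_fun :: "real \<Rightarrow> ('a \<Rightarrow> 'b) \<Rightarrow> 'a \<Rightarrow> 'b"
  where "scaleR_fun r f = (\<lambda>x. r *\<^sub>R f x)"
instance
  by standard (auto simp: scaleR_fun_def fun_eq_iff scaleR_add_right scaleR_add_left)
end

definition unitv :: "nat \<Rightarrow> nat \<Rightarrow> real" where
  "unitv i = (\<lambda>k. if k = i then 1 else 0)"

definition K_edges :: "nat \<Rightarrow> nat \<Rightarrow> (nat \<times> nat) set" where
  "K_edges a b = {(i, j). a \<le> i \<and> i < j \<and> j \<le> b}"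

definition Qtilde :: "(nat \<times> nat) set \<Rightarrow> (nat \<Rightarrow> real) set" where
  "Qtilde E = convex hull (insert 0 {unitv i - unitv j | i j. (i, j) \<in> E})"

end

theory Submission
  imports Defs
begin


definition lin :: "((nat \<Rightarrow> real) \<Rightarrow> real) \<Rightarrow> bool" where
  "lin f \<longleftrightarrow> (\<forall>x y. f (x + y) = f x + f y) \<and> (\<forall>c x. f (c *\<^sub>R x) = c * f x)"

lemma lin_sum: assumes "lin f" "finite S" shows "f (sum g S) = (\<Sum>v\<in>S. f (g v))"
  using assms(2)
proof induction
  case empty
  have "f (0 *\<^sub>R (0::nat\<Rightarrow>real)) = 0" using assms(1) unfolding lin_def by (metis mult_zero_left)
  then show ?case by (simp only: sum.empty scaleR_zero_left)
next
  case (insert x F)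
  then show ?case using assms(1) unfolding lin_def by (metis sum.insert)
qed

lemma lin_comb: assumes "lin f" "finite S" shows "f (\<Sum>v\<in>S. u v *\<^sub>R v) = (\<Sum>v\<in>S. u v * f v)"
  using lin_sum[OF assms] assms(1) unfolding lin_def by simp

lemma hull_le:
  assumes "lin f" "finite V" "\<forall>v\<in>V. f v \<le> c" "x \<in> convex hull V"
  shows "f x \<le> c"
proof -
  obtain u where u: "\<forall>v\<in>V. 0 \<le> u v" "sum u V = 1" "(\<Sum>v\<in>V. u v *\<^sub>R v) = x"
    using assms(4) unfolding convex_hull_finite[OF assms(2)] by blast
  have "f x = (\<Sum>v\<in>V. u v * f v)" using lin_comb[OF assms(1,2), of u] u(3) by simp
  also have "\<dots> \<le> (\<Sum>v\<in>V. u v * c)"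
    by (rule sum_mono) (use u(1) assms(3) in \<open>simp add: mult_left_mono\<close>)
  also have "\<dots> = c" using u(2) by (metis mult.commute mult_1 sum_distrib_right)
  finally show ?thesis .
qed

lemma hull_eq:
  assumes "lin f" "finite V" "\<forall>v\<in>V. f v \<le> c" "x \<in> convex hull V" "f x = c"
  shows "x \<in> convex hull {v\<in>V. f v = c}"
proof -
  obtain u where u: "\<forall>v\<in>V. 0 \<le> u v" "sum u V = 1" "(\<Sum>v\<in>V. u v *\<^sub>R v) = x"
    using assms(4) unfolding convex_hull_finite[OF assms(2)] by blast
  have fx: "f x = (\<Sum>v\<in>V. u v * f v)" using lin_comb[OF assms(1,2), of u] u(3) by simp
  have "(\<Sum>v\<in>V. u v * (c - f v)) = (\<Sum>v\<in>V. u v) * c - (\<Sum>v\<in>V. u v * f v)"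
    by (simp add: right_diff_distrib sum_subtractf sum_distrib_right)
  also have "\<dots> = 0" using u(2) fx assms(5) by simp
  finally have s0: "(\<Sum>v\<in>V. u v * (c - f v)) = 0" .
  have "\<forall>v\<in>V. u v * (c - f v) = 0"
    using sum_nonneg_eq_0_iff[OF assms(2), of "\<lambda>v. u v * (c - f v)"] s0 u(1) assms(3) by simp
  hence z: "\<forall>v\<in>V - {v\<in>V. f v = c}. u v = 0" by auto
  have fin: "finite {v\<in>V. f v = c}" using assms(2) by simp
  have "sum u {v\<in>V. f v = c} = 1"
    using u(2) sum.mono_neutral_left[OF assms(2), of "{v\<in>V. f v = c}" u] z by auto
  moreover have "(\<Sum>v\<in>{v\<in>V. f v = c}. u v *\<^sub>R v) = x"
    using u(3) sum.mono_neutral_left[OF assms(2), of "{v\<in>V. f v = c}" "\<lambda>v. u v *\<^sub>R v"] z by auto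
  ultimately show ?thesis unfolding convex_hull_finite[OF fin] using u(1) by auto
qed

definition gens :: "(nat \<times> nat) set \<Rightarrow> (nat \<Rightarrow> real) set" where
  "gens E = insert 0 ((\<lambda>(i,j). unitv i - unitv j) ` E)"

lemma Qtilde_gens: "Qtilde E = convex hull (gens E)"
  unfolding Qtilde_def gens_def by (rule arg_cong[where f="\<lambda>S. convex hull S"]) auto

lemma finite_gens: "finite E \<Longrightarrow> finite (gens E)"
  unfolding gens_def by simp

lemma finite_K: "finite (K_edges a b)"
  by (rule finite_subset[of _ "{a..b} \<times> {a..b}"]) (auto simp: K_edges_def)

lemma unitv_app: "(unitv i - unitv j) k = (if k = i then 1 else 0) - (if k = j then 1 else 0)"
  by (simp add: unitv_def)

lemma L1:
  assumes "\<forall>(i,j)\<in>E. i \<noteq> j" "finite E" "a \<noteq> b" "unitv a - unitv b \<in> Qtilde E"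
  shows "(a,b) \<in> E"
proof (rule ccontr)
  assume nE: "(a,b) \<notin> E"
  define g where "g = (\<lambda>x::nat\<Rightarrow>real. x a - x b)"
  have lg: "lin g" unfolding lin_def g_def by (simp add: scaleR_fun_def algebra_simps)
  have "\<forall>v\<in>gens E. g v \<le> 1"
  proof
    fix v assume "v \<in> gens E"
    then consider "v = 0" | i j where "(i,j) \<in> E" "v = unitv i - unitv j" unfolding gens_def by auto
    then show "g v \<le> 1"
    proof cases
      case 1 then show ?thesis by (simp add: g_def)
    next
      case 2
      then have "i \<noteq> j" "(i,j) \<noteq> (a,b)" using assms(1) nE by auto
      then show ?thesis using 2(2) assms(3) unfolding g_def unitv_app by auto
    qed
  qed
  then have "g (unitv a - unitv b) \<le> 1"
    using hull_le[OF lg finite_gens[OF assms(2)]] assms(4) unfolding Qtilde_gens by blast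
  moreover have "g (unitv a - unitv b) = 2" using assms(3) unfolding g_def unitv_app by simp
  ultimately show False by simp
qed

lemma gen_in: "(i,j) \<in> E \<Longrightarrow> unitv i - unitv j \<in> Qtilde E"
  unfolding Qtilde_gens gens_def by (rule hull_inc) auto

lemma zero_in: "0 \<in> Qtilde E"
  unfolding Qtilde_gens gens_def by (rule hull_inc) auto

lemma E_props:
  assumes "E \<subseteq> K_edges 1 n"
  shows "\<forall>(i,j)\<in>E. i \<noteq> j" "finite E"
  using assms finite_subset[OF assms finite_K] by (auto simp: K_edges_def)

lemma face_P1:
  assumes face: "Qtilde E face_of Qtilde (K_edges 1 n)" and sub: "E \<subseteq> K_edges 1 n"
    and ij: "(i,j) \<in> E" and "i < m" "m < j"
  shows "(i,m) \<in> E \<and> (m,j) \<in> E"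
proof -
  have cT: "convex (Qtilde E)" unfolding Qtilde_def by simp
  have x: "(1 - 1/2) *\<^sub>R 0 + (1/2::real) *\<^sub>R (unitv i - unitv j) \<in> Qtilde E"
    by (rule convexD[OF cT zero_in gen_in[OF ij]]) auto
  have ijK: "(i,j) \<in> K_edges 1 n" using ij sub by auto
  have a: "unitv i - unitv m \<in> Qtilde (K_edges 1 n)" 
    by (rule gen_in) (use ijK \<open>i<m\<close> \<open>m<j\<close> in \<open>auto simp: K_edges_def\<close>)
  have b: "unitv m - unitv j \<in> Qtilde (K_edges 1 n)" 
    by (rule gen_in) (use ijK \<open>i<m\<close> \<open>m<j\<close> in \<open>auto simp: K_edges_def\<close>)
  have ne: "unitv i - unitv m \<noteq> unitv m - unitv j"
  proof
    assume "unitv i - unitv m = unitv m - unitv j"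
    then have "(unitv i - unitv m) i = (unitv m - unitv j) i" by simp
    then show False using \<open>i<m\<close> \<open>m<j\<close> unfolding unitv_app by simp
  qed
  have eq: "(1 - 1/2) *\<^sub>R 0 + (1/2::real) *\<^sub>R (unitv i - unitv j) =
     (1 - 1/2) *\<^sub>R (unitv i - unitv m) + (1/2::real) *\<^sub>R (unitv m - unitv j)"
    by (simp add: fun_eq_iff scaleR_fun_def unitv_def)
  have "(1 - 1/2) *\<^sub>R 0 + (1/2::real) *\<^sub>R (unitv i - unitv j) \<in> open_segment (unitv i - unitv m) (unitv m - unitv j)"
    unfolding in_segment(2) using ne eq by (intro conjI exI[of _ "1/2"]) auto
  then have "unitv i - unitv m \<in> Qtilde E \<and> unitv m - unitv j \<in> Qtilde E"
    using face a b x unfolding face_of_def by blast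
  then show ?thesis using L1[OF E_props[OF sub]] \<open>i<m\<close> \<open>m<j\<close> by auto
qed

lemma face_P2:
  assumes face: "Qtilde E face_of Qtilde (K_edges 1 n)" and sub: "E \<subseteq> K_edges 1 n"
    and im: "(i,m) \<in> E" and mj: "(m,j) \<in> E"
  shows "(i,j) \<in> E"
proof -
  have imK: "(i,m) \<in> K_edges 1 n" "(m,j) \<in> K_edges 1 n" using im mj sub by auto
  hence ord: "1 \<le> i" "i < m" "m < j" "j \<le> n" by (auto simp: K_edges_def)
  have cT: "convex (Qtilde E)" unfolding Qtilde_def by simp
  have x: "(1 - 1/2) *\<^sub>R (unitv i - unitv m) + (1/2::real) *\<^sub>R (unitv m - unitv j) \<in> Qtilde E"
    by (rule convexD[OF cT gen_in[OF im] gen_in[OF mj]]) auto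
  have b: "unitv i - unitv j \<in> Qtilde (K_edges 1 n)" 
    by (rule gen_in) (use ord in \<open>auto simp: K_edges_def\<close>)
  have ne: "0 \<noteq> unitv i - unitv j"
  proof
    assume "0 = unitv i - unitv j"
    then have "(0::nat\<Rightarrow>real) i = (unitv i - unitv j) i" by simp
    then show False using ord unfolding unitv_app by simp
  qed
  have eq: "(1 - 1/2) *\<^sub>R (unitv i - unitv m) + (1/2::real) *\<^sub>R (unitv m - unitv j) =
      (1 - 1/2) *\<^sub>R 0 + (1/2::real) *\<^sub>R (unitv i - unitv j)"
    by (simp add: fun_eq_iff scaleR_fun_def unitv_def)
  have "(1 - 1/2) *\<^sub>R (unitv i - unitv m) + (1/2::real) *\<^sub>R (unitv m - unitv j) \<in> open_segment 0 (unitv i - unitv j)"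
    unfolding in_segment(2) using ne eq by (intro conjI exI[of _ "1/2"]) auto
  then have "unitv i - unitv j \<in> Qtilde E"
    using face zero_in b x unfolding face_of_def by blast
  then show ?thesis using L1[OF E_props[OF sub]] ord by auto
qed



lemma union_char: "(\<Union>k\<le>l. K_edges (ns k + 1) (ns (Suc k))) = {(i,j). \<exists>k\<le>l. ns k < i \<and> i < j \<and> j \<le> ns (Suc k)}"
  by (auto simp: K_edges_def)

lemma mono_ns: "\<forall>k\<le>l. ns k < ns (Suc k) \<Longrightarrow> k < k' \<Longrightarrow> k' \<le> Suc l \<Longrightarrow> ns k < (ns k' :: nat)"
proof (induction k')
  case 0 then show ?case by simp
next
  case (Suc k')
  have k'l: "k' \<le> l" using Suc.prems(3) by simp
  have st: "ns k' < ns (Suc k')" using Suc.prems(1) k'l by simp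
  show ?case
  proof (cases "k = k'")
    case True then show ?thesis using st by simp
  next
    case False
    then have "ns k < ns k'" using Suc.IH Suc.prems k'l by simp
    then show ?thesis using st by simp
  qed
qed

lemma blocks:
  fixes n :: nat
  assumes "1 \<le> n"
  shows "E \<subseteq> K_edges 1 n \<Longrightarrow> (\<forall>i m j. (i,j)\<in>E \<longrightarrow> i<m \<longrightarrow> m<j \<longrightarrow> (i,m)\<in>E \<and> (m,j)\<in>E) \<Longrightarrow>
    (\<forall>i m j. (i,m)\<in>E \<longrightarrow> (m,j)\<in>E \<longrightarrow> (i,j)\<in>E) \<Longrightarrow>
    \<exists>l ns. ns 0 = 0 \<and> ns (Suc l) = n \<and> (\<forall>k\<le>l. ns k < ns (Suc k)) \<and>
      E = {(i,j). \<exists>k\<le>l. ns k < i \<and> i < j \<and> j \<le> ns (Suc k)}"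
  using assms
proof (induction n arbitrary: E rule: nat_induct_at_least)
  case base
  have "K_edges 1 1 = {}" by (auto simp: K_edges_def)
  then have "E = {}" using base(1) by blast
  then show ?case
    by (intro exI[of _ 0] exI[of _ "\<lambda>k. if k = 0 then 0 else 1"]) auto
next
  case (Suc n)
  define E' where "E' = {(i,j). (i,j) \<in> E \<and> j \<le> n}"
  have h1: "E' \<subseteq> K_edges 1 n" using Suc.prems(1) unfolding E'_def K_edges_def by auto
  have h2: "\<forall>i m j. (i,j)\<in>E' \<longrightarrow> i<m \<longrightarrow> m<j \<longrightarrow> (i,m)\<in>E' \<and> (m,j)\<in>E'"
  proof (intro allI impI)
    fix i m j assume a: "(i,j)\<in>E'" "i<m" "m<j"
    then have b: "(i,j)\<in>E" "j\<le>n" unfolding E'_def by auto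
    have "(i,m)\<in>E \<and> (m,j)\<in>E" using Suc.prems(2)[rule_format, OF b(1) a(2,3)] .
    then show "(i,m)\<in>E' \<and> (m,j)\<in>E'" unfolding E'_def using a b by simp
  qed
  have h3: "\<forall>i m j. (i,m)\<in>E' \<longrightarrow> (m,j)\<in>E' \<longrightarrow> (i,j)\<in>E'"
  proof (intro allI impI)
    fix i m j assume a: "(i,m)\<in>E'" "(m,j)\<in>E'"
    then have b: "(i,m)\<in>E" "(m,j)\<in>E" "j\<le>n" unfolding E'_def by auto
    have "(i,j)\<in>E" using Suc.prems(3)[rule_format, OF b(1,2)] .
    then show "(i,j)\<in>E'" unfolding E'_def using b by simp
  qed
  have "\<exists>l ns. ns 0 = 0 \<and> ns (Suc l) = n \<and> (\<forall>k\<le>l. ns k < ns (Suc k)) \<and>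
      E' = {(i,j). \<exists>k\<le>l. ns k < i \<and> i < j \<and> j \<le> ns (Suc k)}"
    by (rule Suc.IH[of E', OF h1 h2 h3])
  then obtain l ns where ns: "ns 0 = 0" "ns (Suc l) = n" "\<forall>k\<le>l. ns k < ns (Suc k)"
    and E': "E' = {(i,j). \<exists>k\<le>l. ns k < i \<and> i < j \<and> j \<le> ns (Suc k)}"
    by blast
  have Esplit: "(i,j) \<in> E \<longleftrightarrow> (i,j) \<in> E' \<or> (j = Suc n \<and> (i,j) \<in> E)" for i j
    using Suc.prems(1) unfolding E'_def K_edges_def by auto
  have lt: "ns l < n" using ns(3)[rule_format, of l] ns(2) by simp
  show ?case
  proof (cases "(n, Suc n) \<in> E")
    case True
    define ns' where "ns' = ns(Suc l := Suc n)"
    have last: "(i, Suc n) \<in> E \<longleftrightarrow> ns l < i \<and> i < Suc n" for i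
    proof
      assume iE: "(i, Suc n) \<in> E"
      then have i1: "1 \<le> i" "i < Suc n" using Suc.prems(1) by (auto simp: K_edges_def)
      show "ns l < i \<and> i < Suc n"
      proof (cases "i = n")
        case True then show ?thesis using lt by simp
      next
        case False
        then have "i < n" using i1 by simp
        then have "(i, n) \<in> E" using Suc.prems(2)[rule_format, OF iE \<open>i<n\<close>] by simp
        then have "(i, n) \<in> E'" unfolding E'_def by simp
        then obtain k where k: "k \<le> l" "ns k < i" "n \<le> ns (Suc k)" using E' by auto
        have "k = l"
        proof (rule ccontr)
          assume "k \<noteq> l"
          then have "ns (Suc k) < ns (Suc l)" using mono_ns[OF ns(3), of "Suc k" "Suc l"] k(1) by simp
          then show False using k(3) ns(2) by simp
        qed
        then show ?thesis using k i1 by simp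
      qed
    next
      assume a: "ns l < i \<and> i < Suc n"
      show "(i, Suc n) \<in> E"
      proof (cases "i = n")
        case True then show ?thesis using \<open>(n, Suc n) \<in> E\<close> by simp
      next
        case False
        then have "(i, n) \<in> E'" using E' a ns(2) by auto
        then have "(i, n) \<in> E" unfolding E'_def by simp
        then show ?thesis using Suc.prems(3) \<open>(n, Suc n) \<in> E\<close> by blast
      qed
    qed
    show ?thesis
    proof (intro exI[of _ l] exI[of _ ns'] conjI)
      show "ns' 0 = 0" "ns' (Suc l) = Suc n" using ns unfolding ns'_def by auto
      show "\<forall>k\<le>l. ns' k < ns' (Suc k)" using ns lt unfolding ns'_def by auto
      show "E = {(i,j). \<exists>k\<le>l. ns' k < i \<and> i < j \<and> j \<le> ns' (Suc k)}"
      proof (intro set_eqI, clarify)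
        fix i j
        have A: "(\<exists>k\<le>l. ns' k < i \<and> i < j \<and> j \<le> ns' (Suc k)) \<longleftrightarrow>
             (\<exists>k\<le>l. ns k < i \<and> i < j \<and> j \<le> ns (Suc k)) \<or> (j = Suc n \<and> ns l < i \<and> i < j)"
        proof
          assume "\<exists>k\<le>l. ns' k < i \<and> i < j \<and> j \<le> ns' (Suc k)"
          then obtain k where k: "k \<le> l" "ns' k < i" "i < j" "j \<le> ns' (Suc k)" by blast
          show "(\<exists>k\<le>l. ns k < i \<and> i < j \<and> j \<le> ns (Suc k)) \<or> (j = Suc n \<and> ns l < i \<and> i < j)"
          proof (cases "k = l")
            case True
            then show ?thesis using k ns(2) unfolding ns'_def
              by (cases "j = Suc n") (auto intro!: exI[of _ l])
          next
            case False
            then show ?thesis using k unfolding ns'_def by auto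
          qed
        next
          assume "(\<exists>k\<le>l. ns k < i \<and> i < j \<and> j \<le> ns (Suc k)) \<or> (j = Suc n \<and> ns l < i \<and> i < j)"
          then show "\<exists>k\<le>l. ns' k < i \<and> i < j \<and> j \<le> ns' (Suc k)"
          proof
            assume "\<exists>k\<le>l. ns k < i \<and> i < j \<and> j \<le> ns (Suc k)"
            then obtain k where k: "k \<le> l" "ns k < i" "i < j" "j \<le> ns (Suc k)" by blast
            then show ?thesis unfolding ns'_def
              by (intro exI[of _ k]) (auto simp: ns(2))
          next
            assume "j = Suc n \<and> ns l < i \<and> i < j"
            then show ?thesis unfolding ns'_def by (intro exI[of _ l]) auto
          qed
        qed
        have "(i,j) \<in> E \<longleftrightarrow> (i,j) \<in> E' \<or> (j = Suc n \<and> (i,Suc n) \<in> E)"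
          using Esplit[of i j] by auto
        also have "\<dots> \<longleftrightarrow> (\<exists>k\<le>l. ns k < i \<and> i < j \<and> j \<le> ns (Suc k)) \<or> (j = Suc n \<and> ns l < i \<and> i < j)"
          using last[of i] E' by auto
        finally show "((i,j) \<in> E) = ((i,j) \<in> {(i,j). \<exists>k\<le>l. ns' k < i \<and> i < j \<and> j \<le> ns' (Suc k)})"
          using A by simp
      qed
    qed
  next
    case False
    have none: "(i, Suc n) \<notin> E" for i
    proof
      assume iE: "(i, Suc n) \<in> E"
      then have "i < Suc n" using Suc.prems(1) by (auto simp: K_edges_def)
      show False
      proof (cases "i = n")
        case True then show False using False iE by simp
      next
        case F: False
        then have "i < n" using \<open>i < Suc n\<close> by simp
        then show False using Suc.prems(2)[rule_format, OF iE \<open>i<n\<close>] False by simp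
      qed
    qed
    have EE: "E = E'" using Esplit none by auto
    define ns' where "ns' = ns(Suc (Suc l) := Suc n)"
    show ?thesis
    proof (intro exI[of _ "Suc l"] exI[of _ ns'] conjI)
      show "ns' 0 = 0" "ns' (Suc (Suc l)) = Suc n" using ns unfolding ns'_def by auto
      show "\<forall>k\<le>Suc l. ns' k < ns' (Suc k)" using ns unfolding ns'_def
        by (auto simp: le_Suc_eq)
      show "E = {(i,j). \<exists>k\<le>Suc l. ns' k < i \<and> i < j \<and> j \<le> ns' (Suc k)}"
      proof (intro set_eqI iffI)
        fix x assume "x \<in> E"
        then obtain i j k where x: "x = (i,j)" "k \<le> l" "ns k < i" "i < j" "j \<le> ns (Suc k)"
          unfolding EE E' by blast
        have "k \<le> Suc l" "ns' k = ns k" "ns' (Suc k) = ns (Suc k)" using x(2) unfolding ns'_def by auto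
        then show "x \<in> {(i,j). \<exists>k\<le>Suc l. ns' k < i \<and> i < j \<and> j \<le> ns' (Suc k)}"
          using x by (intro CollectI, simp only: x(1) prod.case, intro exI[of _ k]) simp
      next
        fix x assume "x \<in> {(i,j). \<exists>k\<le>Suc l. ns' k < i \<and> i < j \<and> j \<le> ns' (Suc k)}"
        then obtain i j k where x: "x = (i,j)" "k \<le> Suc l" "ns' k < i" "i < j" "j \<le> ns' (Suc k)"
          by blast
        show "x \<in> E"
        proof (cases "k = Suc l")
          case True
          then have "ns' k = n" "ns' (Suc k) = Suc n" using ns(2) unfolding ns'_def by auto
          then show ?thesis using x by simp
        next
          case False
          then have "k \<le> l" "ns' k = ns k" "ns' (Suc k) = ns (Suc k)" using x(2) unfolding ns'_def by auto
          then show ?thesis unfolding EE E' using x by auto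
        qed
      qed
    qed
  qed
qed



lemma exists_block: "ns 0 < a \<Longrightarrow> a \<le> ns (Suc l) \<Longrightarrow> \<exists>k\<le>l. ns k < a \<and> a \<le> (ns (Suc k) :: nat)"
proof (induction l)
  case 0 then show ?case by auto
next
  case (Suc l)
  show ?case
  proof (cases "a \<le> ns (Suc l)")
    case True then show ?thesis using Suc.IH Suc.prems(1) by (meson le_Suc_eq)
  next
    case False then show ?thesis using Suc.prems(2) by (intro exI[of _ "Suc l"]) simp
  qed
qed

lemma block_iff:
  fixes ns :: "nat \<Rightarrow> nat"
  assumes ns: "ns 0 = 0" "ns (Suc l) = n" "\<forall>k\<le>l. ns k < ns (Suc k)"
    and ab: "1 \<le> a" "a < b" "b \<le> n"
  shows "(\<exists>k\<le>l. ns k < a \<and> b \<le> ns (Suc k)) \<longleftrightarrow> \<not>(\<exists>k\<in>{1..l}. a \<le> ns k \<and> ns k < b)"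
proof
  assume "\<exists>k\<le>l. ns k < a \<and> b \<le> ns (Suc k)"
  then obtain k0 where k0: "k0 \<le> l" "ns k0 < a" "b \<le> ns (Suc k0)" by blast
  show "\<not>(\<exists>k\<in>{1..l}. a \<le> ns k \<and> ns k < b)"
  proof
    assume "\<exists>k\<in>{1..l}. a \<le> ns k \<and> ns k < b"
    then obtain k where k: "1 \<le> k" "k \<le> l" "a \<le> ns k" "ns k < b" by auto
    show False
    proof (cases "k \<le> k0")
      case True
      then have "ns k \<le> ns k0" using mono_ns[OF ns(3), of k k0] k0(1) by (cases "k = k0") auto
      then show False using k k0 by simp
    next
      case False
      then have "ns (Suc k0) \<le> ns k" using mono_ns[OF ns(3), of "Suc k0" k] k(2) by (cases "Suc k0 = k") auto
      then show False using k k0 by simp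
    qed
  qed
next
  assume nc: "\<not>(\<exists>k\<in>{1..l}. a \<le> ns k \<and> ns k < b)"
  obtain k0 where k0: "k0 \<le> l" "ns k0 < a" "a \<le> ns (Suc k0)"
    using exists_block[of ns a l] ns(1,2) ab by auto
  show "\<exists>k\<le>l. ns k < a \<and> b \<le> ns (Suc k)"
  proof (cases "b \<le> ns (Suc k0)")
    case True then show ?thesis using k0 by blast
  next
    case False
    have "k0 \<noteq> l" using False ns(2) ab by auto
    then have "Suc k0 \<in> {1..l}" using k0(1) by simp
    then show ?thesis using nc k0(3) False by auto
  qed
qed

lemma sum_unitv:
  assumes "1 \<le> a" "1 \<le> b"
  shows "(\<Sum>i\<in>{1..m}. (unitv a - unitv b) i) = (if a \<le> m then 1 else 0) - (if b \<le> m then 1 else 0)"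
proof -
  have "(\<Sum>i\<in>{1..m}. (unitv a - unitv b) i) =
     (\<Sum>i\<in>{1..m}. if i = a then 1 else 0) - (\<Sum>i\<in>{1..m}. if i = b then (1::real) else 0)"
    unfolding unitv_app by (simp add: sum_subtractf)
  also have "\<dots> = (if a \<le> m then 1 else 0) - (if b \<le> m then 1 else 0)"
    using assms by (simp add: sum.delta')
  finally show ?thesis .
qed

lemma face_from_blocks:
  fixes ns :: "nat \<Rightarrow> nat"
  assumes ns: "ns 0 = 0" "ns (Suc l) = n" "\<forall>k\<le>l. ns k < ns (Suc k)"
    and sub: "E \<subseteq> K_edges 1 n"
    and Eeq: "E = {(i,j). \<exists>k\<le>l. ns k < i \<and> i < j \<and> j \<le> ns (Suc k)}"
  shows "Qtilde E face_of Qtilde (K_edges 1 n)"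
proof -
  define f where "f = (\<lambda>x::nat\<Rightarrow>real. - (\<Sum>k\<in>{1..l}. \<Sum>i\<in>{1..ns k}. x i))"
  have lf: "lin f" unfolding lin_def f_def
    by (simp add: scaleR_fun_def sum.distrib sum_distrib_left)
  have lnf: "lin (\<lambda>x. - f x)" using lf unfolding lin_def by simp
  have fval: "f (unitv a - unitv b) = (\<Sum>k\<in>{1..l}. (if b \<le> ns k then 1 else 0) - (if a \<le> ns k then 1 else 0))"
    if "1 \<le> a" "1 \<le> b" for a b
    unfolding f_def using sum_unitv[OF that] by (simp add: sum_subtractf)
  have terms: "\<forall>k\<in>{1..l}. (if b \<le> ns k then 1 else 0) - (if a \<le> ns k then 1 else (0::real)) \<le> 0"
    if "a < b" for a b using that by auto
  have Kgen: "f (unitv a - unitv b) \<le> 0" if "(a,b) \<in> K_edges 1 n" for a b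
  proof -
    have ab: "1 \<le> a" "a < b" using that by (auto simp: K_edges_def)
    show ?thesis unfolding fval[OF ab(1) order.trans[OF ab(1) less_imp_le[OF ab(2)]]]
      by (rule sum_nonpos) (use terms[OF ab(2)] in auto)
  qed
  have Kzero: "(a,b) \<in> E" if ab: "(a,b) \<in> K_edges 1 n" "f (unitv a - unitv b) = 0" for a b
  proof -
    have o: "1 \<le> a" "a < b" "b \<le> n" using ab(1) by (auto simp: K_edges_def)
    have "(\<Sum>k\<in>{1..l}. (if a \<le> ns k then 1 else 0) - (if b \<le> ns k then 1 else (0::real))) = 0"
      using ab(2) fval[of a b] o by (simp add: sum_subtractf)
    then have "\<forall>k\<in>{1..l}. (if a \<le> ns k then 1 else 0) - (if b \<le> ns k then 1 else (0::real)) = 0"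
      using sum_nonneg_eq_0_iff[of "{1..l}" "\<lambda>k. (if a \<le> ns k then 1 else 0) - (if b \<le> ns k then 1 else (0::real))"]
        o by auto
    then have "\<not>(\<exists>k\<in>{1..l}. a \<le> ns k \<and> ns k < b)" by fastforce
    then have "\<exists>k\<le>l. ns k < a \<and> b \<le> ns (Suc k)" using block_iff[OF ns o] by blast
    then show ?thesis unfolding Eeq using o by auto
  qed
  have Egen: "f (unitv a - unitv b) = 0" if "(a,b) \<in> E" for a b
  proof -
    have abK: "(a,b) \<in> K_edges 1 n" using that sub by auto
    have o: "1 \<le> a" "a < b" "b \<le> n" using abK by (auto simp: K_edges_def)
    have "\<exists>k\<le>l. ns k < a \<and> b \<le> ns (Suc k)" using that unfolding Eeq by auto
    then have nc: "\<not>(\<exists>k\<in>{1..l}. a \<le> ns k \<and> ns k < b)" using block_iff[OF ns o] by blast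
    have "\<forall>k\<in>{1..l}. (if b \<le> ns k then 1 else 0) - (if a \<le> ns k then 1 else (0::real)) = 0"
    proof
      fix k assume "k \<in> {1..l}"
      then have "\<not> (a \<le> ns k \<and> ns k < b)" using nc by blast
      then show "(if b \<le> ns k then 1 else 0) - (if a \<le> ns k then 1 else (0::real)) = 0"
        using o by auto
    qed
    then show ?thesis using fval[of a b] o by simp
  qed
  have finK: "finite (gens (K_edges 1 n))" by (rule finite_gens[OF finite_K])
  have finE: "finite (gens E)" by (rule finite_gens[OF finite_subset[OF sub finite_K]])
  have gK: "\<forall>v\<in>gens (K_edges 1 n). f v \<le> 0"
    unfolding gens_def using Kgen by (auto simp: f_def)
  have gE: "\<forall>v\<in>gens E. f v = 0"
    unfolding gens_def using Egen by (auto simp: f_def)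
  have sub0: "{v\<in>gens (K_edges 1 n). f v = 0} \<subseteq> gens E"
    unfolding gens_def using Kzero by auto
  have subg: "gens E \<subseteq> gens (K_edges 1 n)" unfolding gens_def using sub by auto
  show ?thesis unfolding face_of_def Qtilde_gens
  proof (intro conjI ballI impI)
    show "convex hull gens E \<subseteq> convex hull gens (K_edges 1 n)" by (rule hull_mono[OF subg])
    show "convex (convex hull gens E)" by simp
    fix a b x assume a: "a \<in> convex hull gens (K_edges 1 n)" and b: "b \<in> convex hull gens (K_edges 1 n)"
      and x: "x \<in> convex hull gens E" and seg: "x \<in> open_segment a b"
    have fa: "f a \<le> 0" by (rule hull_le[OF lf finK gK a])
    have fb: "f b \<le> 0" by (rule hull_le[OF lf finK gK b])
    have fx1: "f x \<le> 0" by (rule hull_le[OF lf finE _ x]) (use gE in auto)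
    have fx2: "- f x \<le> 0" by (rule hull_le[OF lnf finE _ x]) (use gE in auto)
    obtain u where u: "0 < u" "u < 1" "x = (1 - u) *\<^sub>R a + u *\<^sub>R b" using seg unfolding in_segment(2) by blast
    have "f x = (1 - u) * f a + u * f b" using lf unfolding lin_def u(3) by simp
    then have eq: "(1 - u) * f a + u * f b = 0" using fx1 fx2 by simp
    have t1: "(1 - u) * f a \<le> 0" using u fa by (simp add: mult_nonneg_nonpos)
    have t2: "u * f b \<le> 0" using u fb by (simp add: mult_nonneg_nonpos)
    have "(1 - u) * f a = 0" "u * f b = 0" using eq t1 t2 by linarith+
    then have fa0: "f a = 0" and fb0: "f b = 0" using u by auto
    have "a \<in> convex hull {v\<in>gens (K_edges 1 n). f v = 0}" by (rule hull_eq[OF lf finK gK a fa0])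
    then show "a \<in> convex hull gens E" using hull_mono[OF sub0] by blast
    have "b \<in> convex hull {v\<in>gens (K_edges 1 n). f v = 0}" by (rule hull_eq[OF lf finK gK b fb0])
    then show "b \<in> convex hull gens E" using hull_mono[OF sub0] by blast
  qed
qed

theorem mainTheorem17:
  fixes n :: nat and E :: "(nat \<times> nat) set"
  assumes "1 \<le> n" and "E \<subseteq> K_edges 1 n"
  shows "Qtilde E face_of Qtilde (K_edges 1 n) \<longleftrightarrow>
    (\<exists>(l::nat) (ns::nat \<Rightarrow> nat). ns 0 = 0 \<and> ns (Suc l) = n \<and>
       (\<forall>k\<le>l. ns k < ns (Suc k)) \<and>
       E = (\<Union>k\<le>l. K_edges (ns k + 1) (ns (Suc k))))"
proof
  assume face: "Qtilde E face_of Qtilde (K_edges 1 n)"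
  have p1: "\<forall>i m j. (i,j)\<in>E \<longrightarrow> i<m \<longrightarrow> m<j \<longrightarrow> (i,m)\<in>E \<and> (m,j)\<in>E"
    using face_P1[OF face assms(2)] by blast
  have p2: "\<forall>i m j. (i,m)\<in>E \<longrightarrow> (m,j)\<in>E \<longrightarrow> (i,j)\<in>E"
    using face_P2[OF face assms(2)] by blast
  show "\<exists>(l::nat) (ns::nat \<Rightarrow> nat). ns 0 = 0 \<and> ns (Suc l) = n \<and>
       (\<forall>k\<le>l. ns k < ns (Suc k)) \<and> E = (\<Union>k\<le>l. K_edges (ns k + 1) (ns (Suc k)))"
    unfolding union_char by (rule blocks[OF assms(1) assms(2) p1 p2])
next
  assume "\<exists>(l::nat) (ns::nat \<Rightarrow> nat). ns 0 = 0 \<and> ns (Suc l) = n \<and>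
       (\<forall>k\<le>l. ns k < ns (Suc k)) \<and> E = (\<Union>k\<le>l. K_edges (ns k + 1) (ns (Suc k)))"
  then obtain l ns where ns: "ns 0 = 0" "ns (Suc l) = n" "\<forall>k\<le>l. ns k < ns (Suc k)"
    and Eeq: "E = (\<Union>k\<le>l. K_edges (ns k + 1) (ns (Suc k)))" by blast
  show "Qtilde E face_of Qtilde (K_edges 1 n)"
    by (rule face_from_blocks[OF ns assms(2)]) (use Eeq union_char in simp)
qed

end
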